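(* Let $m=m_n\ge1$ and $d=d_n$ be integers with $2\le d\le n$, and let $G_{nmd}$ be the random graph on $\{1,\dots,n\}$ obtained by sampling mutually independent uniformly random $d$-element subsets $V_1,\dots,V_m$ of $\{1,\dots,n\}$ and declaring distinct nodes $i,j$ adjacent iff some $V_k$ contains both. Then, as $n\to\infty$, \[ \mathbb{P}(G_{nmd} \text{ is connected}) \to \begin{cases} 0 & \text{if } \log n + m\log(1-d/n) \to +\infty,\\ 1 & \text{if } \log n + m\log(1-d/n) \to -\infty.\end{cases} \]
   Context: Convention $\log 0=-\infty$. *)

theory Defs
  imports "HOL-Analysis.Analysis"
begin

text \<open>Sample space: tuples (V_0,...,V_{m-1}) of d-element subsets of {1..n}.
  Uniform product measure = counting measure on this finite set.\<close>
definition subset_tuples :: "nat \<Rightarrow> nat \<Rightarrow> nat \<Rightarrow> (nat \<Rightarrow> nat set) set" where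
  "subset_tuples n m d = PiE {..<m} (\<lambda>_. {V. V \<subseteq> {1..n} \<and> card V = d})"

definition gen_edges :: "nat \<Rightarrow> nat \<Rightarrow> (nat \<Rightarrow> nat set) \<Rightarrow> (nat \<times> nat) set" where
  "gen_edges n m V = {(i, j). i \<in> {1..n} \<and> j \<in> {1..n} \<and> i \<noteq> j \<and> (\<exists>k<m. i \<in> V k \<and> j \<in> V k)}"

definition gen_connected :: "nat \<Rightarrow> nat \<Rightarrow> (nat \<Rightarrow> nat set) \<Rightarrow> bool" where
  "gen_connected n m V = (\<forall>i\<in>{1..n}. \<forall>j\<in>{1..n}. (i, j) \<in> (gen_edges n m V)\<^sup>*)"

definition prob_connected :: "nat \<Rightarrow> nat \<Rightarrow> nat \<Rightarrow> real" where
  "prob_connected n m d =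
     real (card {V \<in> subset_tuples n m d. gen_connected n m V}) / real (card (subset_tuples n m d))"

definition elog :: "real \<Rightarrow> ereal" where
  "elog x = (if x = 0 then -\<infinity> else ereal (ln x))"

definition threshold_term :: "nat \<Rightarrow> nat \<Rightarrow> nat \<Rightarrow> ereal" where
  "threshold_term n m d = elog (real n) + ereal (real m) * elog (1 - real d / real n)"

end

theory Submission
  imports Defs
begin


lemma bern_powr:
  fixes b N :: real
  assumes b0: "0 < b" and b1: "b \<le> 1" and N: "1 \<le> N"
  shows "1 + N * (b - 1) \<le> b powr N"
proof -
  define h where "h x = x powr N - 1 - N * (x - 1)" for x :: real
  have "h 1 \<le> h b"
  proof (rule DERIV_nonpos_imp_nonincreasing[of b 1 h])
    show "b \<le> 1" by (rule b1)
    fix x assume x: "b \<le> x" "x \<le> 1"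
    hence xp: "0 < x" using b0 by linarith
    have "(h has_real_derivative (N * x powr (N - 1) - N)) (at x)"
      unfolding h_def using xp
      by (auto intro!: derivative_eq_intros)
    moreover have "x powr (N - 1) \<le> 1"
      using x xp N by (intro powr_le1) auto
    hence "N * x powr (N - 1) - N \<le> 0" using N
      by (metis diff_le_0_iff_le mult_left_le mult_nonneg_nonneg order_trans zero_le_one)
    ultimately show "\<exists>y. (h has_real_derivative y) (at x) \<and> y \<le> 0" by blast
  qed
  thus ?thesis unfolding h_def by simp
qed



lemma choose_Suc_mult: "(a choose Suc k) * Suc k = (a choose k) * (a - k)"
proof (cases a)
  case 0 then show ?thesis by simp
next
  case (Suc a')
  have "(a choose Suc k) * Suc k = a * (a' choose k)"
    using Suc_times_binomial_eq[of a' k] Suc by simp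
  also have "\<dots> = (a - k) * (a choose k)"
    using binomial_absorb_comp[of a k] Suc by simp
  finally show ?thesis by simp
qed

lemma choose_ratio_le:
  assumes "a \<le> n"
  shows "real (a choose k) * real n ^ k \<le> real (n choose k) * real a ^ k"
proof (induction k)
  case 0 then show ?case by simp
next
  case (Suc k)
  have e1: "real (a choose Suc k) * real (Suc k) = real (a choose k) * real (a - k)"
    by (metis choose_Suc_mult of_nat_mult)
  have e2: "real (n choose Suc k) * real (Suc k) = real (n choose k) * real (n - k)"
    by (metis choose_Suc_mult of_nat_mult)
  have k1: "real (a - k) * real n \<le> real a * real (n - k)"
  proof (cases "k \<le> a")
    case True
    then have "real (a - k) = real a - real k" "real (n - k) = real n - real k"
      using assms by auto
    moreover have "real a * real k \<le> real k * real n" using assms by (metis mult.commute mult_right_mono of_nat_0_le_iff of_nat_mono)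
    ultimately show ?thesis by (simp add: algebra_simps)
  next
    case False then show ?thesis by simp
  qed
  have "real (a choose Suc k) * real n ^ Suc k * real (Suc k)
        = (real (a choose Suc k) * real (Suc k)) * (real n ^ k * real n)"
    by (simp add: algebra_simps)
  also have "\<dots> = (real (a choose k) * real (a - k)) * (real n ^ k * real n)"
    by (simp only: e1)
  also have "\<dots> = (real (a choose k) * real n ^ k) * (real (a - k) * real n)"
    by (simp add: algebra_simps)
  also have "\<dots> \<le> (real (n choose k) * real a ^ k) * (real (a - k) * real n)"
    by (intro mult_right_mono Suc.IH) auto
  also have "\<dots> \<le> (real (n choose k) * real a ^ k) * (real a * real (n - k))"
    by (intro mult_left_mono k1) auto
  also have "\<dots> = (real (n choose k) * real (n - k)) * (real a ^ k * real a)"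
    by (simp add: algebra_simps)
  also have "\<dots> = (real (n choose Suc k) * real (Suc k)) * (real a ^ k * real a)"
    by (simp only: e2)
  also have "\<dots> = real (n choose Suc k) * real a ^ Suc k * real (Suc k)"
    by (simp add: algebra_simps)
  finally show ?case by simp
qed

lemma choose_swap:
  assumes "s \<le> n" "d \<le> n"
  shows "((n - s) choose d) * (n choose s) = ((n - d) choose s) * (n choose d)"
proof (cases "s + d \<le> n")
  case True
  have 1: "(n choose (s + d)) * ((s + d) choose s) = (n choose s) * ((n - s) choose d)"
    using choose_mult[of s "s + d" n] True by simp
  have 2: "(n choose (s + d)) * ((s + d) choose d) = (n choose d) * ((n - d) choose s)"
    using choose_mult[of d "s + d" n] True by simp
  have 3: "((s + d) choose s) = ((s + d) choose d)"
    using binomial_symmetric[of s "s+d"] by simp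
  show ?thesis using 1 2 3 by (simp add: mult.commute)
next
  case False
  then have "n - s < d" "n - d < s" using assms by auto
  then show ?thesis by (simp add: binomial_eq_0)
qed

lemma A_bound:
  assumes "s \<le> n" "d \<le> n" "0 < n"
  shows "real ((n - s) choose d) / real (n choose d) \<le> (1 - real d / real n) ^ s"
proof -
  have pos: "real (n choose d) > 0" "real (n choose s) > 0" using assms by auto
  have sw: "real ((n - s) choose d) * real (n choose s) = real ((n - d) choose s) * real (n choose d)"
    by (metis choose_swap[OF assms(1,2)] of_nat_mult)
  have "real ((n - s) choose d) / real (n choose d) = real ((n - d) choose s) / real (n choose s)"
    using pos sw by (simp add: field_simps)
  also have "\<dots> \<le> (real (n - d) / real n) ^ s"
    using choose_ratio_le[of "n - d" n s] pos assms
    by (simp add: field_simps power_divide)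
  also have "real (n - d) / real n = 1 - real d / real n"
    using assms by (simp add: field_simps of_nat_diff)
  finally show ?thesis .
qed

lemma B_bound:
  assumes "a \<le> n" "0 < n" "d \<le> n"
  shows "real (a choose d) / real (n choose d) \<le> (real a / real n) ^ d"
proof -
  have pos: "real (n choose d) > 0" using assms by auto
  show ?thesis
    using choose_ratio_le[of a n d] pos assms by (simp add: field_simps power_divide)
qed



lemma N_ge1:
  assumes "2 \<le> s" "2 * s \<le> n"
  shows "1 \<le> real s * real (n - s) / real n"
proof -
  have "n \<le> 2 * (n - s)" using assms by simp
  also have "\<dots> \<le> s * (n - s)" using assms by (intro mult_le_mono1) auto
  finally have "real n \<le> real s * real (n - s)" by (metis of_nat_le_iff of_nat_mult)
  moreover have "real n > 0" using assms by simp
  ultimately show ?thesis using le_divide_eq_1_pos by blast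
qed

lemma FG:
  assumes k2: "2 \<le> k" and ks: "k \<le> s" and sn: "2 * s \<le> n"
  shows "(1 - real s / real n) ^ k + (real s / real n) ^ k
         \<le> (1 - real k / real n) powr (real s * real (n - s) / real n)"
  using k2
proof (induction k rule: dec_induct)
  have n4: "real n \<ge> 4" "real s \<ge> 2" using k2 ks sn by linarith+
  define N where "N = real s * real (n - s) / real n"
  have nms: "real (n - s) = real n - real s" using sn by (simp add: of_nat_diff)
  have N1: "1 \<le> N" unfolding N_def using N_ge1[of s n] k2 ks sn by simp
  case base
  have "(1 - real s / real n)^2 + (real s / real n)^2 = 1 + N * ((1 - 2 / real n) - 1)"
    unfolding N_def nms using n4 by (simp add: field_simps power2_eq_square)
  also have "\<dots> \<le> (1 - 2 / real n) powr N"
    by (rule bern_powr) (use n4 N1 in auto)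
  finally show ?case unfolding N_def by simp
next
  case (step j)
  have n4: "real n \<ge> 4" "real s \<ge> 2" using k2 ks sn by linarith+
  define N where "N = real s * real (n - s) / real n"
  define x where "x = real s / real n"
  have nms: "real (n - s) = real n - real s" using sn by (simp add: of_nat_diff)
  have N1: "1 \<le> N" unfolding N_def using N_ge1[of s n] k2 ks sn by simp
  have js: "real j + 1 \<le> real s" using step ks by linarith
  have x0: "0 \<le> x" and x12: "x \<le> 1 - x" unfolding x_def using n4 sn by (auto simp: field_simps)
  have IH: "(1 - x) ^ j + x ^ j \<le> (1 - real j / real n) powr N"
    using step.IH unfolding x_def N_def by simp
  have F: "(1 - x) ^ Suc j + x ^ Suc j \<le> (1 - x) * ((1 - x) ^ j + x ^ j)"
  proof -
    have "x ^ Suc j = x * x ^ j" by simp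
    also have "\<dots> \<le> (1 - x) * x ^ j" using x0 x12 by (intro mult_right_mono) auto
    finally show ?thesis by (simp add: algebra_simps)
  qed
  define b where "b = 1 - 1 / (real n - real j)"
  have nj: "real n - real j \<ge> 2" using js sn n4 by linarith
  have b0: "0 < b" "b \<le> 1" unfolding b_def using nj by (auto simp: field_simps)
  have prodeq: "1 - real (Suc j) / real n = (1 - real j / real n) * b"
    unfolding b_def using nj n4 by (simp add: field_simps)
  have bN: "1 - x \<le> b powr N"
  proof -
    have "1 - x \<le> 1 + N * (b - 1)"
    proof -
      have "N * (1 - b) = N / (real n - real j)" unfolding b_def by simp
      also have "\<dots> \<le> x"
        unfolding N_def x_def nms using nj n4 js
        by (simp add: field_simps mult_left_mono)
      finally show ?thesis by (simp add: algebra_simps)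
    qed
    also have "\<dots> \<le> b powr N" by (rule bern_powr) (use b0 N1 in auto)
    finally show ?thesis .
  qed
  have g0: "0 \<le> 1 - real j / real n" using nj n4 by (simp add: field_simps)
  have "(1 - x) ^ Suc j + x ^ Suc j \<le> (1 - x) * ((1 - real j / real n) powr N)"
    using F IH x12 x0 by (meson diff_ge_0_iff_ge mult_left_mono order_trans)
  also have "\<dots> \<le> b powr N * (1 - real j / real n) powr N"
    by (intro mult_right_mono bN) auto
  also have "\<dots> = (1 - real (Suc j) / real n) powr N"
    unfolding prodeq using g0 b0 by (simp add: powr_mult mult.commute)
  finally show ?case unfolding x_def N_def .
qed



lemma p_bound:
  assumes d2: "2 \<le> d" and dn: "d \<le> n" and s1: "1 \<le> s" and sn: "2 * s \<le> n"
  shows "(real (s choose d) + real ((n - s) choose d)) / real (n choose d)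
         \<le> (1 - real d / real n) powr (real s * real (n - s) / real n)"
proof (cases "d \<le> s")
  case True
  have n0: "0 < n" using sn s1 by linarith
  have "(real (s choose d) + real ((n - s) choose d)) / real (n choose d)
      = real (s choose d) / real (n choose d) + real ((n - s) choose d) / real (n choose d)"
    by (simp add: add_divide_distrib)
  also have "\<dots> \<le> (real s / real n) ^ d + (real (n - s) / real n) ^ d"
    by (intro add_mono B_bound) (use sn n0 dn in auto)
  also have "real (n - s) / real n = 1 - real s / real n"
    using sn n0 by (simp add: field_simps of_nat_diff)
  also have "(real s / real n) ^ d + (1 - real s / real n) ^ d
      \<le> (1 - real d / real n) powr (real s * real (n - s) / real n)"
    using FG[OF d2 True sn] by simp
  finally show ?thesis .
next
  case False
  have n0: "0 < n" using sn s1 by linarith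
  have "(real (s choose d) + real ((n - s) choose d)) / real (n choose d)
     = real ((n - s) choose d) / real (n choose d)" using False by simp
  also have "\<dots> \<le> (1 - real d / real n) ^ s"
    by (rule A_bound) (use sn dn n0 in auto)
  also have "\<dots> \<le> (1 - real d / real n) powr (real s * real (n - s) / real n)"
  proof (cases "real d = real n")
    case True
    then show ?thesis using s1 by (simp add: power_0_left)
  next
    case False
    have q0: "0 < 1 - real d / real n" using False dn n0 by (simp add: field_simps)
    have q1: "1 - real d / real n \<le> 1" by simp
    have Ns: "real s * real (n - s) / real n \<le> real s"
    proof -
      have "real s * real (n - s) \<le> real s * real n" by (intro mult_left_mono) auto
      thus ?thesis using n0 by (simp add: pos_divide_le_eq mult.commute)
    qed
    have "(1 - real d / real n) ^ s = (1 - real d / real n) powr real s"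
      using q0 by (simp add: powr_realpow)
    also have "\<dots> \<le> (1 - real d / real n) powr (real s * real (n - s) / real n)"
      by (rule powr_mono'[OF Ns]) (use q0 q1 in auto)
    finally show ?thesis .
  qed
  finally show ?thesis .
qed

lemma pow_le_exp_fact: "real s ^ s \<le> exp (real s) * fact s"
proof (induction s)
  case 0 then show ?case by simp
next
  case (Suc s)
  have key: "real (Suc s) ^ s \<le> exp 1 * real s ^ s"
  proof (cases "s = 0")
    case True then show ?thesis by simp
  next
    case False
    then have sp: "real s > 0" by simp
    have "real (Suc s) = real s * (1 + 1 / real s)" using sp by (simp add: field_simps)
    then have "real (Suc s) ^ s = real s ^ s * (1 + 1 / real s) ^ s" by (simp add: power_mult_distrib)
    also have "(1 + 1 / real s) ^ s \<le> exp (1 / real s) ^ s"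
      by (intro power_mono) (use exp_ge_add_one_self[of "1 / real s"] sp in auto)
    also have "exp (1 / real s) ^ s = exp 1"
      using sp by (simp add: exp_of_nat_mult[symmetric])
    finally show ?thesis using sp by (simp add: mult.commute mult_left_mono)
  qed
  have "real (Suc s) ^ Suc s = real (Suc s) * real (Suc s) ^ s" by simp
  also have "\<dots> \<le> real (Suc s) * (exp 1 * real s ^ s)"
    by (intro mult_left_mono key) auto
  also have "\<dots> \<le> real (Suc s) * (exp 1 * (exp (real s) * fact s))"
    by (intro mult_left_mono Suc.IH) auto
  also have "\<dots> = exp (real (Suc s)) * fact (Suc s)"
    by (simp add: exp_add[symmetric] algebra_simps)
  finally show ?case .
qed

lemma npow_bound:
  assumes "1 \<le> s" "s \<le> n"
  shows "real n powr (real s / real n) \<le> exp 1 * real s"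
proof -
  have sp: "real s > 0" and np: "real n > 0" using assms by auto
  have "real s / real n * ln (real n) = real s / real n * ln (real s) + real s / real n * ln (real n / real s)"
    using sp np by (simp add: ln_div algebra_simps)
  also have "real s / real n * ln (real s) \<le> ln (real s)"
    using sp np assms by (intro mult_left_le_one_le) (auto simp: field_simps)
  also have "real s / real n * ln (real n / real s) \<le> real s / real n * (real n / real s)"
    using sp np ln_le_minus_one[of "real n / real s"] by (intro mult_left_mono) auto
  also have "real s / real n * (real n / real s) = 1" using sp np by simp
  finally have "real s / real n * ln (real n) \<le> 1 + ln (real s)" by simp
  hence "exp (real s / real n * ln (real n)) \<le> exp (1 + ln (real s))" by simp
  thus ?thesis using sp np by (simp add: powr_def exp_add)
qed



lemma term_bound:
  assumes n2: "2 \<le> n" and s1: "1 \<le> s" and sn: "2 * s \<le> n" and a0: "0 \<le> a"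
    and ae: "real n * a \<le> \<epsilon>" and e1: "\<epsilon> \<le> 1"
  shows "real (n choose s) * a powr (real s * real (n - s) / real n) \<le> (exp 2 * sqrt \<epsilon>) ^ s"
proof (cases "a = 0")
  case True
  have "0 \<le> \<epsilon>" using ae a0 by (smt (verit) mult_nonneg_nonneg of_nat_0_le_iff)
  then show ?thesis using True by simp
next
  case False
  have np: "real n > 0" and sp: "real s > 0" using n2 s1 by auto
  have ap: "a > 0" using a0 False by simp
  have ep: "\<epsilon> > 0" using ae ap np by (smt (verit) mult_pos_pos)
  define N where "N = real s * real (n - s) / real n"
  have nms: "real (n - s) = real n - real s" using sn by (simp add: of_nat_diff)
  have NN: "N = real s - real s * real s / real n"
    unfolding N_def nms using np by (simp add: field_simps)
  have N2: "real s / 2 \<le> N"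
  proof -
    have "real s * real s / real n \<le> real s / 2"
      using sn np sp by (simp add: field_simps)
    thus ?thesis unfolding NN by simp
  qed
  have N0: "0 \<le> N" using N2 sp by simp
  have "a powr N \<le> (\<epsilon> / real n) powr N"
    using ae np a0 N0 by (intro powr_mono2) (auto simp: field_simps)
  also have "\<dots> = \<epsilon> powr N / real n powr N" by (simp add: powr_divide)
  also have "\<epsilon> powr N \<le> \<epsilon> powr (real s / 2)"
    by (rule powr_mono'[OF N2]) (use ep e1 in auto)
  also have "\<epsilon> powr (real s / 2) = sqrt \<epsilon> ^ s"
  proof -
    have "sqrt \<epsilon> ^ s = (\<epsilon> powr (1/2)) ^ s" using ep by (simp add: powr_half_sqrt)
    also have "\<dots> = \<epsilon> powr (real s * (1/2))" using ep by (simp add: powr_power)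
    finally show ?thesis by simp
  qed
  also have "real n powr N = real n ^ s / (real n powr (real s / real n)) ^ s"
  proof -
    have "real n powr N = real n powr real s / real n powr (real s * real s / real n)"
      unfolding NN by (rule powr_diff)
    also have "real n powr real s = real n ^ s" using np by (simp add: powr_realpow)
    also have "real n powr (real s * real s / real n) = (real n powr (real s / real n)) ^ s"
      using np by (simp add: powr_power)
    finally show ?thesis .
  qed
  finally have aN: "a powr N \<le> sqrt \<epsilon> ^ s * (real n powr (real s / real n)) ^ s / real n ^ s"
    using np by (simp add: field_simps)
  have cb: "real (n choose s) \<le> real n ^ s / fact s"
  proof -
    have "real (n choose s) * fact s \<le> real n ^ s"
      using binomial_fact_pow[of n s] by (metis of_nat_fact of_nat_le_iff of_nat_mult of_nat_power)
    thus ?thesis by (simp add: field_simps)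
  qed
  have "real (n choose s) * a powr N
      \<le> (real n ^ s / fact s) * (sqrt \<epsilon> ^ s * (real n powr (real s / real n)) ^ s / real n ^ s)"
    by (intro mult_mono cb aN) auto
  also have "\<dots> = sqrt \<epsilon> ^ s * (real n powr (real s / real n)) ^ s / fact s"
    using np by (simp add: field_simps)
  also have "\<dots> \<le> sqrt \<epsilon> ^ s * (exp 1 * real s) ^ s / fact s"
    using npow_bound[of s n] s1 sn ep
    by (intro divide_right_mono mult_left_mono power_mono) auto
  also have "\<dots> = sqrt \<epsilon> ^ s * exp 1 ^ s * (real s ^ s / fact s)"
    by (simp add: power_mult_distrib)
  also have "\<dots> \<le> sqrt \<epsilon> ^ s * exp 1 ^ s * exp (real s)"
  proof -
    have "real s ^ s / fact s \<le> exp (real s)"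
      using pow_le_exp_fact[of s] by (simp add: divide_le_eq)
    thus ?thesis using ep by (intro mult_left_mono) auto
  qed
  also have "\<dots> = (exp 2 * sqrt \<epsilon>) ^ s"
  proof -
    have "exp (real s) = exp 1 ^ s" by (metis exp_of_nat_mult mult.right_neutral)
    moreover have "exp 2 = exp 1 * (exp 1 :: real)" by (simp add: exp_add[symmetric])
    ultimately show ?thesis by (simp add: power_mult_distrib)
  qed
  finally show ?thesis unfolding N_def .
qed

lemma geom_bound:
  fixes c :: real
  assumes "0 \<le> c" "c \<le> 1/2"
  shows "(\<Sum>s\<in>{1..K}. c ^ s) \<le> 2 * c - 2 * c ^ Suc K"
proof (induction K)
  case 0 then show ?case by simp
next
  case (Suc K)
  have "(\<Sum>s\<in>{1..Suc K}. c ^ s) = (\<Sum>s\<in>{1..K}. c ^ s) + c ^ Suc K" by simp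
  also have "\<dots> \<le> 2 * c - 2 * c ^ Suc K + c ^ Suc K" using Suc.IH by simp
  also have "\<dots> \<le> 2 * c - 2 * c ^ Suc (Suc K)"
  proof -
    have "2 * c ^ Suc (Suc K) = (2 * c) * c ^ Suc K" by simp
    also have "\<dots> \<le> 1 * c ^ Suc K" using assms by (intro mult_right_mono) auto
    finally show ?thesis by simp
  qed
  finally show ?case .
qed



definition Dset :: "nat \<Rightarrow> nat \<Rightarrow> nat set set" where
  "Dset n d = {V. V \<subseteq> {1..n} \<and> card V = d}"

lemma subset_tuples_eq: "subset_tuples n m d = PiE {..<m} (\<lambda>_. Dset n d)"
  unfolding subset_tuples_def Dset_def by simp

lemma finite_Dset: "finite (Dset n d)"
  unfolding Dset_def by (rule finite_subset[of _ "Pow {1..n}"]) auto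

lemma card_Dset: "card (Dset n d) = n choose d"
  unfolding Dset_def using n_subsets[of "{1..n}" d] by simp

lemma finite_Omega: "finite (subset_tuples n m d)"
  unfolding subset_tuples_eq by (intro finite_PiE finite_Dset) auto

lemma card_PiE_const: "finite I \<Longrightarrow> card (PiE I (\<lambda>_. E)) = card E ^ card I"
  by (simp add: card_PiE)

lemma card_Omega: "card (subset_tuples n m d) = (n choose d) ^ m"
  unfolding subset_tuples_eq by (simp add: card_PiE_const card_Dset)

lemma PiE_filter:
  "{V \<in> PiE I (\<lambda>_. E). \<forall>k\<in>I. P (V k)} = PiE I (\<lambda>_. {W\<in>E. P W})"
  unfolding PiE_def Pi_def by auto

lemma card_filter_tuples:
  "card {V \<in> subset_tuples n m d. \<forall>k<m. P (V k)} = card {W\<in>Dset n d. P W} ^ m"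
proof -
  have "{V \<in> subset_tuples n m d. \<forall>k<m. P (V k)} = {V \<in> PiE {..<m} (\<lambda>_. Dset n d). \<forall>k\<in>{..<m}. P (V k)}"
    unfolding subset_tuples_eq by auto
  also have "\<dots> = PiE {..<m} (\<lambda>_. {W\<in>Dset n d. P W})"
    by (rule PiE_filter)
  finally have "{V \<in> subset_tuples n m d. \<forall>k<m. P (V k)} = PiE {..<m} (\<lambda>_. {W\<in>Dset n d. P W})" .
  thus ?thesis by (simp add: card_PiE_const)
qed

lemma closed_set_exists:
  assumes V: "V \<in> subset_tuples n m d" and nc: "\<not> gen_connected n m V"
  shows "\<exists>S. S \<subseteq> {1..n} \<and> 1 \<le> card S \<and> 2 * card S \<le> n \<and>
             (\<forall>k<m. V k \<subseteq> S \<or> V k \<subseteq> {1..n} - S)"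
proof -
  have Vsub: "\<And>k. k < m \<Longrightarrow> V k \<subseteq> {1..n}"
    using V unfolding subset_tuples_def by (auto simp: PiE_iff)
  obtain i j where ij: "i \<in> {1..n}" "j \<in> {1..n}" "(i, j) \<notin> (gen_edges n m V)\<^sup>*"
    using nc unfolding gen_connected_def by blast
  define C where "C = {k \<in> {1..n}. (i, k) \<in> (gen_edges n m V)\<^sup>*}"
  have CS: "C \<subseteq> {1..n}" unfolding C_def by auto
  have iC: "i \<in> C" unfolding C_def using ij by auto
  have jC: "j \<notin> C" unfolding C_def using ij by auto
  have closed: "V t \<subseteq> C \<or> V t \<subseteq> {1..n} - C" if t: "t < m" for t
  proof (rule ccontr)
    assume "\<not> (V t \<subseteq> C \<or> V t \<subseteq> {1..n} - C)"
    then obtain a b where a: "a \<in> V t" "a \<in> C" and b: "b \<in> V t" "b \<notin> C"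
      using Vsub[OF t] by blast
    have "(a, b) \<in> gen_edges n m V"
      unfolding gen_edges_def using a b Vsub[OF t] t by auto
    moreover have "(i, a) \<in> (gen_edges n m V)\<^sup>*" using a unfolding C_def by auto
    ultimately have "(i, b) \<in> (gen_edges n m V)\<^sup>*" by (meson rtrancl_into_rtrancl)
    then have "b \<in> C" unfolding C_def using b Vsub[OF t] by auto
    with b show False by simp
  qed
  have finC: "finite C" using CS finite_subset by blast
  show ?thesis
  proof (cases "2 * card C \<le> n")
    case True
    have "1 \<le> card C" using iC finC by (metis One_nat_def Suc_leI card_gt_0_iff empty_iff)
    then show ?thesis using True CS closed by blast
  next
    case False
    define S where "S = {1..n} - C"
    have cS: "card S = n - card C" unfolding S_def using CS by (simp add: card_Diff_subset finC)
    have "j \<in> S" unfolding S_def using ij jC by auto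
    then have "1 \<le> card S" unfolding S_def
      by (metis One_nat_def Suc_leI card_gt_0_iff empty_iff finite_Diff finite_atLeastAtMost)
    moreover have "2 * card S \<le> n" using cS False by simp
    moreover have "{1..n} - S = C" unfolding S_def using CS by auto
    ultimately show ?thesis using closed unfolding S_def by auto
  qed
qed

lemma card_T:
  assumes "S \<subseteq> {1..n}"
  shows "card {V \<in> subset_tuples n m d. \<forall>k<m. V k \<subseteq> S \<or> V k \<subseteq> {1..n} - S}
         \<le> ((card S choose d) + ((n - card S) choose d)) ^ m"
proof -
  have finS: "finite S" using assms finite_subset by blast
  have "{W \<in> Dset n d. W \<subseteq> S \<or> W \<subseteq> {1..n} - S}
        \<subseteq> {W. W \<subseteq> S \<and> card W = d} \<union> {W. W \<subseteq> {1..n} - S \<and> card W = d}"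
    unfolding Dset_def by auto
  then have "card {W \<in> Dset n d. W \<subseteq> S \<or> W \<subseteq> {1..n} - S}
        \<le> card ({W. W \<subseteq> S \<and> card W = d} \<union> {W. W \<subseteq> {1..n} - S \<and> card W = d})"
  proof (intro card_mono finite_UnI)
    show "finite {W. W \<subseteq> S \<and> card W = d}"
      by (rule finite_subset[of _ "Pow S"]) (use finS in auto)
    show "finite {W. W \<subseteq> {1..n} - S \<and> card W = d}"
      by (rule finite_subset[of _ "Pow {1..n}"]) auto
  qed
  also have "\<dots> \<le> card {W. W \<subseteq> S \<and> card W = d} + card {W. W \<subseteq> {1..n} - S \<and> card W = d}"
    by (rule card_Un_le)
  also have "\<dots> = (card S choose d) + ((n - card S) choose d)"
    using n_subsets[OF finS, of d] n_subsets[of "{1..n} - S" d] assms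
    by (simp add: card_Diff_subset finS)
  finally have "card {W \<in> Dset n d. W \<subseteq> S \<or> W \<subseteq> {1..n} - S} ^ m
     \<le> ((card S choose d) + ((n - card S) choose d)) ^ m" by (intro power_mono) auto
  then show ?thesis using card_filter_tuples[of n m d "\<lambda>W. W \<subseteq> S \<or> W \<subseteq> {1..n} - S"] by simp
qed



lemma card_split:
  assumes "finite A"
  shows "card {x\<in>A. P x} + card {x\<in>A. \<not> P x} = card A"
proof -
  have "A = {x\<in>A. P x} \<union> {x\<in>A. \<not> P x}" by auto
  then have "card A = card ({x\<in>A. P x} \<union> {x\<in>A. \<not> P x})" by simp
  also have "\<dots> = card {x\<in>A. P x} + card {x\<in>A. \<not> P x}"
    by (rule card_Un_disjoint) (use assms in auto)
  finally show ?thesis by simp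
qed

lemma disc_count:
  "card {V \<in> subset_tuples n m d. \<not> gen_connected n m V}
   \<le> (\<Sum>s\<in>{1..n div 2}. (n choose s) * ((s choose d) + ((n - s) choose d)) ^ m)"
proof -
  define T where "T S = {V \<in> subset_tuples n m d. \<forall>k<m. V k \<subseteq> S \<or> V k \<subseteq> {1..n} - S}" for S
  define Sub where "Sub s = {S. S \<subseteq> {1..n} \<and> card S = s}" for s
  have finSub: "finite (Sub s)" for s
    unfolding Sub_def by (rule finite_subset[of _ "Pow {1..n}"]) auto
  have cardSub: "card (Sub s) = n choose s" for s
    unfolding Sub_def using n_subsets[of "{1..n}" s] by simp
  have sub: "{V \<in> subset_tuples n m d. \<not> gen_connected n m V} \<subseteq> (\<Union>s\<in>{1..n div 2}. \<Union>S\<in>Sub s. T S)"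
  proof
    fix V assume "V \<in> {V \<in> subset_tuples n m d. \<not> gen_connected n m V}"
    then have V: "V \<in> subset_tuples n m d" "\<not> gen_connected n m V" by auto
    obtain S where S: "S \<subseteq> {1..n}" "1 \<le> card S" "2 * card S \<le> n"
      "\<forall>k<m. V k \<subseteq> S \<or> V k \<subseteq> {1..n} - S"
      using closed_set_exists[OF V] by blast
    have "card S \<in> {1..n div 2}" using S by auto
    moreover have "S \<in> Sub (card S)" unfolding Sub_def using S by auto
    moreover have "V \<in> T S" unfolding T_def using S V by auto
    ultimately show "V \<in> (\<Union>s\<in>{1..n div 2}. \<Union>S\<in>Sub s. T S)" by blast
  qed
  have fin: "finite (\<Union>s\<in>{1..n div 2}. \<Union>S\<in>Sub s. T S)"
    by (rule finite_subset[OF _ finite_Omega[of n m d]]) (auto simp: T_def)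
  have "card {V \<in> subset_tuples n m d. \<not> gen_connected n m V} \<le> card (\<Union>s\<in>{1..n div 2}. \<Union>S\<in>Sub s. T S)"
    by (rule card_mono[OF fin sub])
  also have "\<dots> \<le> (\<Sum>s\<in>{1..n div 2}. card (\<Union>S\<in>Sub s. T S))"
    by (rule card_UN_le) simp
  also have "\<dots> \<le> (\<Sum>s\<in>{1..n div 2}. \<Sum>S\<in>Sub s. card (T S))"
    by (intro sum_mono card_UN_le finSub)
  also have "\<dots> \<le> (\<Sum>s\<in>{1..n div 2}. \<Sum>S\<in>Sub s. ((s choose d) + ((n - s) choose d)) ^ m)"
  proof (intro sum_mono)
    fix s S assume "S \<in> Sub s"
    then have "S \<subseteq> {1..n}" "card S = s" unfolding Sub_def by auto
    then show "card (T S) \<le> ((s choose d) + ((n - s) choose d)) ^ m"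
      unfolding T_def using card_T[of S n m d] by simp
  qed
  also have "\<dots> = (\<Sum>s\<in>{1..n div 2}. (n choose s) * ((s choose d) + ((n - s) choose d)) ^ m)"
    by (simp add: cardSub)
  finally show ?thesis .
qed

lemma powr_pow_swap:
  fixes q :: real
  assumes "0 \<le> q"
  shows "(q powr N) ^ m = (q ^ m) powr N"
proof (cases "q = 0")
  case True then show ?thesis by (cases m) auto
next
  case False
  then have qp: "q > 0" using assms by simp
  have "(q powr N) ^ m = q powr (real m * N)" using qp by (simp add: powr_power)
  also have "\<dots> = (q powr real m) powr N" by (simp add: powr_powr)
  also have "q powr real m = q ^ m" using qp by (simp add: powr_realpow)
  finally show ?thesis .
qed



lemma part2_bound:
  assumes n2: "2 \<le> n" and d2: "2 \<le> d" and dn: "d \<le> n"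
    and epsdef: "\<epsilon> = real n * (1 - real d / real n) ^ m"
    and small: "exp 2 * sqrt \<epsilon> \<le> 1/2"
  shows "1 - prob_connected n m d \<le> 2 * (exp 2 * sqrt \<epsilon>)"
proof -
  define q where "q = 1 - real d / real n"
  have np: "real n > 0" using n2 by simp
  have q0: "0 \<le> q" unfolding q_def using dn np by (simp add: field_simps)
  have eps0: "0 \<le> \<epsilon>" unfolding epsdef using q0 q_def by simp
  have e1: "\<epsilon> \<le> 1"
  proof -
    have "1 \<le> exp (2::real)" by simp
    then have "sqrt \<epsilon> \<le> exp 2 * sqrt \<epsilon>" using eps0 by (simp add: mult_le_cancel_right1)
    then have "sqrt \<epsilon> \<le> 1" using small by linarith
    then show ?thesis using eps0 by simp
  qed
  define M where "M = real (n choose d) ^ m"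
  have Mp: "M > 0" unfolding M_def using dn by simp
  have cardM: "real (card (subset_tuples n m d)) = M" unfolding M_def card_Omega by simp
  have split: "real (card {V \<in> subset_tuples n m d. gen_connected n m V})
             + real (card {V \<in> subset_tuples n m d. \<not> gen_connected n m V}) = M"
  proof -
    have cs: "card {V \<in> subset_tuples n m d. gen_connected n m V}
       + card {V \<in> subset_tuples n m d. \<not> gen_connected n m V} = card (subset_tuples n m d)"
      by (rule card_split[OF finite_Omega])
    have "real (card {V \<in> subset_tuples n m d. gen_connected n m V}
       + card {V \<in> subset_tuples n m d. \<not> gen_connected n m V}) = M"
      using cs cardM by simp
    then show ?thesis by (simp only: of_nat_add)
  qed
  have "1 - prob_connected n m d = real (card {V \<in> subset_tuples n m d. \<not> gen_connected n m V}) / M"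
    unfolding prob_connected_def cardM using split Mp by (simp add: field_simps)
  also have "\<dots> \<le> (\<Sum>s\<in>{1..n div 2}. real (n choose s) * real ((s choose d) + ((n - s) choose d)) ^ m) / M"
  proof (intro divide_right_mono)
    have "real (card {V \<in> subset_tuples n m d. \<not> gen_connected n m V})
       \<le> real (\<Sum>s\<in>{1..n div 2}. (n choose s) * ((s choose d) + ((n - s) choose d)) ^ m)"
      by (simp only: of_nat_le_iff) (rule disc_count)
    also have "\<dots> = (\<Sum>s\<in>{1..n div 2}. real (n choose s) * real ((s choose d) + ((n - s) choose d)) ^ m)"
      by (simp only: of_nat_sum of_nat_mult of_nat_power)
    finally show "real (card {V \<in> subset_tuples n m d. \<not> gen_connected n m V})
       \<le> (\<Sum>s\<in>{1..n div 2}. real (n choose s) * real ((s choose d) + ((n - s) choose d)) ^ m)" .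
  qed (use Mp in simp)
  also have "\<dots> = (\<Sum>s\<in>{1..n div 2}. real (n choose s) *
       ((real (s choose d) + real ((n - s) choose d)) / real (n choose d)) ^ m)"
    unfolding M_def by (simp add: sum_divide_distrib power_divide)
  also have "\<dots> \<le> (\<Sum>s\<in>{1..n div 2}. real (n choose s) *
       (q powr (real s * real (n - s) / real n)) ^ m)"
  proof (intro sum_mono mult_left_mono power_mono)
    fix s assume s: "s \<in> {1..n div 2}"
    show "(real (s choose d) + real ((n - s) choose d)) / real (n choose d)
          \<le> q powr (real s * real (n - s) / real n)"
      unfolding q_def by (rule p_bound) (use s d2 dn in auto)
  qed auto
  also have "\<dots> = (\<Sum>s\<in>{1..n div 2}. real (n choose s) * (q ^ m) powr (real s * real (n - s) / real n))"
    by (intro sum.cong refl) (simp only: powr_pow_swap[OF q0])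
  also have "\<dots> \<le> (\<Sum>s\<in>{1..n div 2}. (exp 2 * sqrt \<epsilon>) ^ s)"
  proof (intro sum_mono)
    fix s assume s: "s \<in> {1..n div 2}"
    show "real (n choose s) * (q ^ m) powr (real s * real (n - s) / real n) \<le> (exp 2 * sqrt \<epsilon>) ^ s"
      by (rule term_bound) (use s n2 q0 e1 in \<open>auto simp: epsdef q_def\<close>)
  qed
  also have "\<dots> \<le> 2 * (exp 2 * sqrt \<epsilon>) - 2 * (exp 2 * sqrt \<epsilon>) ^ Suc (n div 2)"
    by (rule geom_bound) (use small eps0 in auto)
  also have "\<dots> \<le> 2 * (exp 2 * sqrt \<epsilon>)" using eps0 by simp
  finally show ?thesis .
qed



lemma sum_ind_card:
  assumes "finite A"
  shows "(\<Sum>x\<in>A. if P x then 1 else 0 :: real) = real (card {x\<in>A. P x})"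
proof -
  have "(\<Sum>x\<in>A. if P x then 1 else 0 :: real) = (\<Sum>x\<in>{x\<in>A. P x}. 1 :: real)"
    using sum.inter_filter[OF assms, of "\<lambda>_. 1::real" P] by simp
  also have "\<dots> = real (card {x\<in>A. P x})" by simp
  finally show ?thesis .
qed

lemma card_avoid1:
  assumes "i \<in> {1..n}"
  shows "card {V \<in> subset_tuples n m d. \<forall>k<m. i \<notin> V k} = ((n - 1) choose d) ^ m"
proof -
  have "{W \<in> Dset n d. i \<notin> W} = {W. W \<subseteq> {1..n} - {i} \<and> card W = d}"
    unfolding Dset_def by auto
  then have "card {W \<in> Dset n d. i \<notin> W} = (n - 1) choose d"
    using n_subsets[of "{1..n} - {i}" d] assms by simp
  then show ?thesis using card_filter_tuples[of n m d "\<lambda>W. i \<notin> W"] by simp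
qed

lemma card_avoid2:
  assumes "i \<in> {1..n}" "j \<in> {1..n}" "i \<noteq> j"
  shows "card {V \<in> subset_tuples n m d. \<forall>k<m. i \<notin> V k \<and> j \<notin> V k} = ((n - 2) choose d) ^ m"
proof -
  have "{W \<in> Dset n d. i \<notin> W \<and> j \<notin> W} = {W. W \<subseteq> {1..n} - {i, j} \<and> card W = d}"
    unfolding Dset_def by auto
  moreover have "card ({1..n} - {i, j}) = n - 2" using assms by (simp add: card_Diff_subset)
  ultimately have "card {W \<in> Dset n d. i \<notin> W \<and> j \<notin> W} = (n - 2) choose d"
    using n_subsets[of "{1..n} - {i, j}" d] by simp
  then show ?thesis using card_filter_tuples[of n m d "\<lambda>W. i \<notin> W \<and> j \<notin> W"] by simp
qed

definition Xr :: "nat \<Rightarrow> nat \<Rightarrow> (nat \<Rightarrow> nat set) \<Rightarrow> real" where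
  "Xr n m V = (\<Sum>i\<in>{1..n}. if (\<forall>k<m. i \<notin> V k) then 1 else 0)"

lemma Xr_nonneg: "0 \<le> Xr n m V"
  unfolding Xr_def by (intro sum_nonneg) auto

lemma sum_Xr:
  "(\<Sum>V\<in>subset_tuples n m d. Xr n m V) = real n * real ((n - 1) choose d) ^ m"
proof -
  have "(\<Sum>V\<in>subset_tuples n m d. Xr n m V)
      = (\<Sum>i\<in>{1..n}. \<Sum>V\<in>subset_tuples n m d. if (\<forall>k<m. i \<notin> V k) then 1 else 0)"
    unfolding Xr_def by (rule sum.swap)
  also have "\<dots> = (\<Sum>i\<in>{1..n}. real (((n - 1) choose d) ^ m))"
    by (intro sum.cong refl) (simp add: sum_ind_card[OF finite_Omega] card_avoid1)
  finally show ?thesis by simp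
qed

lemma sum_Xr2:
  "(\<Sum>V\<in>subset_tuples n m d. (Xr n m V)^2)
   \<le> real n * real ((n - 1) choose d) ^ m + real n * real (n - 1) * real ((n - 2) choose d) ^ m"
proof -
  define c1 where "c1 = real ((n - 1) choose d) ^ m"
  define c2 where "c2 = real ((n - 2) choose d) ^ m"
  have sq: "(Xr n m V)^2 = (\<Sum>i\<in>{1..n}. \<Sum>j\<in>{1..n}.
        if (\<forall>k<m. i \<notin> V k \<and> j \<notin> V k) then 1 else 0)" for V
    unfolding Xr_def power2_eq_square sum_product
    by (intro sum.cong refl) auto
  have "(\<Sum>V\<in>subset_tuples n m d. (Xr n m V)^2)
      = (\<Sum>V\<in>subset_tuples n m d. \<Sum>i\<in>{1..n}. \<Sum>j\<in>{1..n}.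
        if (\<forall>k<m. i \<notin> V k \<and> j \<notin> V k) then 1 else 0)"
    by (simp only: sq)
  also have "\<dots> = (\<Sum>i\<in>{1..n}. \<Sum>V\<in>subset_tuples n m d. \<Sum>j\<in>{1..n}.
        if (\<forall>k<m. i \<notin> V k \<and> j \<notin> V k) then 1 else 0)"
    by (rule sum.swap)
  also have "\<dots> = (\<Sum>i\<in>{1..n}. \<Sum>j\<in>{1..n}. \<Sum>V\<in>subset_tuples n m d.
        if (\<forall>k<m. i \<notin> V k \<and> j \<notin> V k) then 1 else 0)"
    by (intro sum.cong refl sum.swap)
  also have "\<dots> = (\<Sum>i\<in>{1..n}. \<Sum>j\<in>{1..n}. if i = j then c1 else c2)"
  proof (intro sum.cong refl)
    fix i j assume ij: "i \<in> {1..n}" "j \<in> {1..n}"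
    show "(\<Sum>V\<in>subset_tuples n m d. if (\<forall>k<m. i \<notin> V k \<and> j \<notin> V k) then 1 else 0)
          = (if i = j then c1 else c2)"
    proof (cases "i = j")
      case True
      then show ?thesis using card_avoid1[OF ij(1), of m d]
        by (simp add: sum_ind_card[OF finite_Omega] c1_def)
    next
      case False
      then show ?thesis using card_avoid2[OF ij False, of m d]
        by (simp add: sum_ind_card[OF finite_Omega] c2_def)
    qed
  qed
  also have "\<dots> = (\<Sum>i\<in>{1..n}. c1 + real (n - 1) * c2)"
  proof (intro sum.cong refl)
    fix i assume i: "i \<in> {1..n}"
    have "(\<Sum>j\<in>{1..n}. if i = j then c1 else c2) = (\<Sum>j\<in>{1..n}. (if i = j then c1 - c2 else 0) + c2)"
      by (intro sum.cong refl) auto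
    also have "\<dots> = (c1 - c2) + real n * c2"
      using i by (simp add: sum.distrib)
    also have "\<dots> = c1 + real (n - 1) * c2"
      using i by (simp add: of_nat_diff algebra_simps)
    finally show "(\<Sum>j\<in>{1..n}. if i = j then c1 else c2) = c1 + real (n - 1) * c2" .
  qed
  also have "\<dots> = real n * (c1 + real (n - 1) * c2)" by (simp only: sum_constant card_atLeastAtMost) simp
  also have "\<dots> = real n * c1 + real n * real (n - 1) * c2" by (simp only: algebra_simps)
  finally show ?thesis unfolding c1_def c2_def by simp
qed

lemma conn_not_iso:
  assumes n2: "2 \<le> n" and c: "gen_connected n m V" and i: "i \<in> {1..n}"
  shows "\<exists>k<m. i \<in> V k"
proof -
  define j where "j = (if i = 1 then 2 else 1::nat)"
  have j: "j \<in> {1..n}" "j \<noteq> i" unfolding j_def using n2 i by auto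
  have "(i, j) \<in> (gen_edges n m V)\<^sup>*" using c i j unfolding gen_connected_def by blast
  then obtain y where "(i, y) \<in> gen_edges n m V"
    using j(2) by (metis converse_rtranclE)
  then show ?thesis unfolding gen_edges_def by auto
qed

lemma conn_Xr0:
  assumes "2 \<le> n" "gen_connected n m V"
  shows "Xr n m V = 0"
  unfolding Xr_def using conn_not_iso[OF assms] by (intro sum.neutral) auto



lemma part1_bound:
  assumes n2: "2 \<le> n" and d2: "2 \<le> d" and dn: "d \<le> n"
    and epsdef: "\<epsilon> = real n * (1 - real d / real n) ^ m"
  shows "prob_connected n m d \<le> 1 / (1 + \<epsilon>)"
proof -
  define q where "q = 1 - real d / real n"
  define C where "C = real (n choose d)"
  define \<Omega> where "\<Omega> = subset_tuples n m d"
  have np: "real n > 0" using n2 by simp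
  have q0: "0 \<le> q" unfolding q_def using dn np by (simp add: field_simps)
  have eps0: "0 \<le> \<epsilon>" unfolding epsdef using q0 q_def by simp
  have Cp: "C > 0" unfolding C_def using dn by simp
  define M where "M = C ^ m"
  have Mp: "M > 0" unfolding M_def using Cp by simp
  have cardM: "real (card \<Omega>) = M" unfolding M_def C_def \<Omega>_def card_Omega by simp
  have finO: "finite \<Omega>" unfolding \<Omega>_def by (rule finite_Omega)
  have c1: "real ((n - 1) choose d) = q * C"
  proof -
    have "(n - d) * (n choose d) = n * ((n - 1) choose d)" by (rule binomial_absorb_comp)
    then have "real (n - d) * C = real n * real ((n - 1) choose d)" unfolding C_def
      by (metis of_nat_mult)
    then show ?thesis unfolding q_def using np dn by (simp add: field_simps of_nat_diff)
  qed
  have c2: "real ((n - 2) choose d) \<le> q ^ 2 * C"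
    using A_bound[of 2 n d] n2 dn Cp unfolding q_def C_def by (simp add: field_simps)
  have SX: "(\<Sum>V\<in>\<Omega>. Xr n m V) = \<epsilon> * M"
    unfolding \<Omega>_def sum_Xr c1 epsdef M_def q_def by (simp add: power_mult_distrib)
  have SX2: "(\<Sum>V\<in>\<Omega>. (Xr n m V)^2) \<le> (\<epsilon> + \<epsilon>^2) * M"
  proof -
    have "(\<Sum>V\<in>\<Omega>. (Xr n m V)^2)
        \<le> real n * real ((n - 1) choose d) ^ m + real n * real (n - 1) * real ((n - 2) choose d) ^ m"
      unfolding \<Omega>_def by (rule sum_Xr2)
    also have "real n * real ((n - 1) choose d) ^ m = \<epsilon> * M"
      unfolding c1 epsdef M_def q_def by (simp add: power_mult_distrib)
    also have "real n * real (n - 1) * real ((n - 2) choose d) ^ m \<le> real n * real n * (q ^ 2 * C) ^ m"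
    proof -
      have p1: "real ((n - 2) choose d) ^ m \<le> (q ^ 2 * C) ^ m" by (intro power_mono c2) auto
      have p2: "real n * real (n - 1) \<le> real n * real n" by (intro mult_left_mono) auto
      show ?thesis by (rule mult_mono[OF p2 p1]) auto
    qed
    also have "real n * real n * (q ^ 2 * C) ^ m = \<epsilon>^2 * M"
      unfolding epsdef M_def q_def by (simp add: power_mult_distrib power2_eq_square power_mult[symmetric] mult.commute[of 2 m] power_mult)
    finally show ?thesis by (simp add: algebra_simps)
  qed
  define A where "A = {V\<in>\<Omega>. Xr n m V \<noteq> 0}"
  define K where "K = real (card A)"
  have AO: "A \<subseteq> \<Omega>" unfolding A_def by auto
  have finA: "finite A" using finO AO finite_subset by blast
  have SXA: "(\<Sum>V\<in>\<Omega>. Xr n m V) = (\<Sum>V\<in>A. Xr n m V)"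
    by (rule sum.mono_neutral_right[OF finO AO]) (auto simp: A_def)
  have CS: "(\<epsilon> * M)^2 \<le> (\<epsilon> + \<epsilon>^2) * M * K"
  proof -
    have "(\<epsilon> * M)^2 = (\<Sum>V\<in>A. Xr n m V)^2" using SX SXA by simp
    also have "\<dots> \<le> (\<Sum>V\<in>A. (Xr n m V)^2) * K"
      unfolding K_def by (rule sum_squared_le_sum_of_squares)
    also have "(\<Sum>V\<in>A. (Xr n m V)^2) \<le> (\<Sum>V\<in>\<Omega>. (Xr n m V)^2)"
      by (rule sum_mono2[OF finO AO]) auto
    also have "\<dots> \<le> (\<epsilon> + \<epsilon>^2) * M" by (rule SX2)
    finally show ?thesis unfolding K_def by (simp add: mult_right_mono)
  qed
  have K0: "0 \<le> K" unfolding K_def by simp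
  have conn_le: "real (card {V \<in> \<Omega>. gen_connected n m V}) \<le> M - K"
  proof -
    have "{V \<in> \<Omega>. gen_connected n m V} \<subseteq> {V \<in> \<Omega>. \<not> Xr n m V \<noteq> 0}"
      using conn_Xr0[OF n2] by auto
    then have "card {V \<in> \<Omega>. gen_connected n m V} \<le> card {V \<in> \<Omega>. \<not> Xr n m V \<noteq> 0}"
      by (intro card_mono) (use finO in auto)
    moreover have "card {V \<in> \<Omega>. Xr n m V \<noteq> 0} + card {V \<in> \<Omega>. \<not> Xr n m V \<noteq> 0} = card \<Omega>"
      by (rule card_split[OF finO])
    ultimately have "card {V \<in> \<Omega>. gen_connected n m V} + card A \<le> card \<Omega>"
      unfolding A_def by linarith
    then have "real (card {V \<in> \<Omega>. gen_connected n m V}) + K \<le> real (card \<Omega>)"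
      unfolding K_def by (metis of_nat_add of_nat_le_iff)
    then show ?thesis using cardM by simp
  qed
  have prob: "prob_connected n m d \<le> (M - K) / M"
  proof -
    have "prob_connected n m d = real (card {V \<in> \<Omega>. gen_connected n m V}) / M"
      unfolding prob_connected_def cardM[symmetric] \<Omega>_def by (rule refl)
    also have "\<dots> \<le> (M - K) / M" using conn_le Mp by (intro divide_right_mono) auto
    finally show ?thesis .
  qed
  show ?thesis
  proof (cases "\<epsilon> = 0")
    case True
    have "(M - K) / M \<le> 1" using K0 Mp by (simp add: divide_le_eq_1_pos)
    then show ?thesis using prob True by simp
  next
    case False
    then have ep: "\<epsilon> > 0" using eps0 by simp
    have "(\<epsilon> * M) * (\<epsilon> * M) \<le> (\<epsilon> * M) * ((1 + \<epsilon>) * K)"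
      using CS by (simp add: power2_eq_square algebra_simps)
    then have key: "\<epsilon> * M \<le> (1 + \<epsilon>) * K"
      using ep Mp by (simp add: mult_le_cancel_left_pos)
    have "(M - K) / M \<le> 1 / (1 + \<epsilon>)"
    proof -
      have "(M - K) * (1 + \<epsilon>) \<le> M" using key by (simp add: algebra_simps)
      then show ?thesis using Mp ep by (simp add: field_simps)
    qed
    then show ?thesis using prob by linarith
  qed
qed



lemma thr_eq:
  assumes n2: "2 \<le> n" and dn: "d \<le> n" and m1: "1 \<le> m"
  shows "threshold_term n m d = (if real n * (1 - real d / real n) ^ m = 0 then -\<infinity>
           else ereal (ln (real n * (1 - real d / real n) ^ m)))"
proof -
  define q where "q = 1 - real d / real n"
  have np: "real n > 0" using n2 by simp
  have q0: "0 \<le> q" unfolding q_def using dn np by (simp add: field_simps)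
  have en: "elog (real n) = ereal (ln (real n))" unfolding elog_def using np by simp
  show ?thesis
  proof (cases "q = 0")
    case True
    have "ereal (real m) * elog q = -\<infinity>" unfolding elog_def using True m1 by simp
    then show ?thesis unfolding threshold_term_def q_def[symmetric] en using True m1 by simp
  next
    case False
    then have qp: "q > 0" using q0 by simp
    have "threshold_term n m d = ereal (ln (real n) + real m * ln q)"
      unfolding threshold_term_def q_def[symmetric] en elog_def using False n2 by simp
    also have "ln (real n) + real m * ln q = ln (real n * q ^ m)"
      using np qp by (simp add: ln_mult ln_realpow)
    finally show ?thesis unfolding q_def[symmetric] using np qp by simp
  qed
qed

lemma prob_nonneg: "0 \<le> prob_connected n m d"
  unfolding prob_connected_def by simp

lemma prob_le1:
  assumes "d \<le> n"
  shows "prob_connected n m d \<le> 1"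
proof -
  have "card {V \<in> subset_tuples n m d. gen_connected n m V} \<le> card (subset_tuples n m d)"
    by (intro card_mono finite_Omega) auto
  moreover have "card (subset_tuples n m d) > 0" unfolding card_Omega using assms by simp
  ultimately show ?thesis unfolding prob_connected_def by (simp add: divide_le_eq_1_pos)
qed

theorem mainTheorem4:
  fixes m d :: "nat \<Rightarrow> nat"
  assumes "\<And>n. n \<ge> 2 \<Longrightarrow> m n \<ge> 1"
    and "\<And>n. n \<ge> 2 \<Longrightarrow> 2 \<le> d n \<and> d n \<le> n"
  shows "(((\<lambda>n. threshold_term n (m n) (d n)) \<longlongrightarrow> \<infinity>) sequentially \<longrightarrow>
           ((\<lambda>n. prob_connected n (m n) (d n)) \<longlongrightarrow> 0) sequentially) \<and>
         (((\<lambda>n. threshold_term n (m n) (d n)) \<longlongrightarrow> -\<infinity>) sequentially \<longrightarrow>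
           ((\<lambda>n. prob_connected n (m n) (d n)) \<longlongrightarrow> 1) sequentially)"
proof (intro conjI impI)
  define \<epsilon> where "\<epsilon> n = real n * (1 - real (d n) / real n) ^ (m n)" for n
  have thr: "threshold_term n (m n) (d n) = (if \<epsilon> n = 0 then -\<infinity> else ereal (ln (\<epsilon> n)))"
    if "n \<ge> 2" for n
    unfolding \<epsilon>_def using thr_eq[of n "d n" "m n"] assms(1)[OF that] assms(2)[OF that] that by simp
  have eps0: "0 \<le> \<epsilon> n" if "n \<ge> 2" for n
    unfolding \<epsilon>_def using assms(2)[OF that] by (simp add: field_simps)
  {
    assume T: "((\<lambda>n. threshold_term n (m n) (d n)) \<longlongrightarrow> \<infinity>) sequentially"
    show "((\<lambda>n. prob_connected n (m n) (d n)) \<longlongrightarrow> 0) sequentially"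
    proof (rule tendstoI)
      fix e :: real assume e: "e > 0"
      have ev: "eventually (\<lambda>n. threshold_term n (m n) (d n) > ereal (ln (1 / e))) sequentially"
        using T by (simp add: tendsto_PInfty)
      show "eventually (\<lambda>n. dist (prob_connected n (m n) (d n)) 0 < e) sequentially"
        using ev eventually_ge_at_top[of 2]
      proof eventually_elim
        case (elim n)
        then have n2: "n \<ge> 2" by simp
        have "\<epsilon> n \<noteq> 0 \<and> ln (1 / e) < ln (\<epsilon> n)"
          using elim(1) thr[OF n2] by (auto split: if_splits)
        then have big: "1 / e < \<epsilon> n" using e eps0[OF n2]
          by (metis ln_less_cancel_iff order_le_less zero_less_divide_1_iff)
        have "prob_connected n (m n) (d n) \<le> 1 / (1 + \<epsilon> n)"
          by (rule part1_bound) (use assms(2)[OF n2] n2 in \<open>auto simp: \<epsilon>_def\<close>)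
        also have "\<dots> < e"
        proof -
          have "1 < e * \<epsilon> n" using big e by (simp add: field_simps)
          then show ?thesis using e eps0[OF n2] by (simp add: field_simps)
        qed
        finally show ?case using prob_nonneg by simp
      qed
    qed
  }
  {
    assume T: "((\<lambda>n. threshold_term n (m n) (d n)) \<longlongrightarrow> -\<infinity>) sequentially"
    show "((\<lambda>n. prob_connected n (m n) (d n)) \<longlongrightarrow> 1) sequentially"
    proof (rule tendstoI)
      fix e :: real assume e: "e > 0"
      define s0 where "s0 = min (e / 4) (1 / 4) / exp 2"
      have s0p: "s0 > 0" unfolding s0_def using e by simp
      have es0: "exp 2 * s0 = min (e / 4) (1 / 4)" unfolding s0_def by simp
      define \<delta> where "\<delta> = s0 ^ 2"
      have dp: "\<delta> > 0" unfolding \<delta>_def using s0p by simp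
      have ev: "eventually (\<lambda>n. threshold_term n (m n) (d n) < ereal (ln \<delta>)) sequentially"
        using T by (simp add: tendsto_MInfty)
      show "eventually (\<lambda>n. dist (prob_connected n (m n) (d n)) 1 < e) sequentially"
        using ev eventually_ge_at_top[of 2]
      proof eventually_elim
        case (elim n)
        then have n2: "n \<ge> 2" by simp
        have "\<epsilon> n \<le> \<delta>"
        proof (cases "\<epsilon> n = 0")
          case True then show ?thesis using dp by simp
        next
          case False
          then have "ln (\<epsilon> n) < ln \<delta>" using elim(1) thr[OF n2] by simp
          then show ?thesis using False eps0[OF n2] dp by (simp add: order_le_less)
        qed
        then have "sqrt (\<epsilon> n) \<le> s0" unfolding \<delta>_def using s0p
          by (metis real_sqrt_le_iff real_sqrt_pow2_iff order_less_imp_le power2_eq_square real_sqrt_abs2 abs_of_pos)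
        then have sm: "exp 2 * sqrt (\<epsilon> n) \<le> min (e / 4) (1 / 4)"
          unfolding es0[symmetric] by (intro mult_left_mono) auto
        have "1 - prob_connected n (m n) (d n) \<le> 2 * (exp 2 * sqrt (\<epsilon> n))"
          by (rule part2_bound) (use assms(2)[OF n2] n2 sm in \<open>auto simp: \<epsilon>_def\<close>)
        also have "\<dots> < e" using sm e by linarith
        finally show ?case using prob_le1[of "d n" n "m n"] assms(2)[OF n2]
          by (simp add: dist_real_def)
      qed
    qed
  }
qed

end
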